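(* Let $\mathcal{C}$ be a category and let $(S,\pi_0,\pi_1,\sigma)$ be a pre-summability structure on $\mathcal{C}$. Let $Z,Y$ be objects and $f_0,f_1,g_0,g_1:Z\to Y$ morphisms such that $(f_0,f_1)$ and $(g_0,g_1)$ are summable, and such that the witnesses $\langle f_0,f_1\rangle,\langle g_0,g_1\rangle : Z\to SY$ are themselves summable. Then for each $i\in\{0,1\}$ the pair $(f_i,g_i)$ is summable, the pair $(f_0+g_0,\,f_1+g_1)$ is summable, and $$\langle f_0,f_1\rangle+\langle g_0,g_1\rangle=\langle f_0+g_0,\;f_1+g_1\rangle .$$
   Context: Assume that for every pair of objects $X,Y$ of $\mathcal{C}$ a distinguished morphism $0_{X,Y}\in\mathcal{C}(X,Y)$ is given. A pre-summability structure on $\mathcal{C}$ is a tuple $(S,\pi_0,\pi_1,\sigma)$ consisting of the following data. First, an endofunctor $S:\mathcal{C}\to\mathcal{C}$ with $S(0_{X,Y})=0_{SX,SY}$ for all $X,Y$. Second, natural transformations $\pi_0,\pi_1,\sigma:S\Rightarrow \mathrm{Id}$. The projections $\pi_0,\pi_1$ must be jointly monic: for $f,g:Y\to SX$, if $\pi_0\circ f=\pi_0\circ g$ and $\pi_1\circ f=\pi_1\circ g$ then $f=g$. Two morphisms $f_0,f_1:X\to Y$ are called summable if there exists $h:X\to SY$ with $\pi_0\circ h=f_0$ and $\pi_1\circ h=f_1$. Such an $h$ is unique by joint monicity; it is called the witness and is written $\langle f_0,f_1\rangle$. In that case the sum is defined as $f_0+f_1:=\sigma_Y\circ\langle f_0,f_1\rangle$.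 *)

theory Defs
  imports Main
begin

text \<open>A category presented by a set of objects, hom-sets, composition
  (cmp g f = g after f) and identities.\<close>
record ('o, 'm) cat =
  Ob  :: "'o set"
  Hom :: "'o \<Rightarrow> 'o \<Rightarrow> 'm set"
  cmp :: "'m \<Rightarrow> 'm \<Rightarrow> 'm"
  idm :: "'o \<Rightarrow> 'm"

definition category :: "('o, 'm) cat \<Rightarrow> bool" where
  "category C \<longleftrightarrow>
     (\<forall>X Y f. f \<in> Hom C X Y \<longrightarrow> X \<in> Ob C \<and> Y \<in> Ob C) \<and>
     (\<forall>X \<in> Ob C. idm C X \<in> Hom C X X) \<and>
     (\<forall>X Y Z f g. f \<in> Hom C X Y \<longrightarrow> g \<in> Hom C Y Z \<longrightarrow> cmp C g f \<in> Hom C X Z) \<and>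
     (\<forall>W X Y Z f g h. f \<in> Hom C W X \<longrightarrow> g \<in> Hom C X Y \<longrightarrow> h \<in> Hom C Y Z \<longrightarrow>
        cmp C h (cmp C g f) = cmp C (cmp C h g) f) \<and>
     (\<forall>X Y f. f \<in> Hom C X Y \<longrightarrow> cmp C (idm C Y) f = f \<and> cmp C f (idm C X) = f)"

text \<open>Data of a pre-summability structure together with the distinguished
  morphisms: zero X Y, the endofunctor (SO on objects, SM on morphisms),
  and the components of the natural transformations pi0, pi1, sigma.\<close>
record ('o, 'm) presum_data =
  zer :: "'o \<Rightarrow> 'o \<Rightarrow> 'm"
  SO  :: "'o \<Rightarrow> 'o"
  SM  :: "'m \<Rightarrow> 'm"
  p0  :: "'o \<Rightarrow> 'm"
  p1  :: "'o \<Rightarrow> 'm"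
  sg  :: "'o \<Rightarrow> 'm"

definition endofunctor :: "('o, 'm) cat \<Rightarrow> ('o \<Rightarrow> 'o) \<Rightarrow> ('m \<Rightarrow> 'm) \<Rightarrow> bool" where
  "endofunctor C FO FM \<longleftrightarrow>
     (\<forall>X \<in> Ob C. FO X \<in> Ob C) \<and>
     (\<forall>X Y f. f \<in> Hom C X Y \<longrightarrow> FM f \<in> Hom C (FO X) (FO Y)) \<and>
     (\<forall>X Y Z f g. f \<in> Hom C X Y \<longrightarrow> g \<in> Hom C Y Z \<longrightarrow>
        FM (cmp C g f) = cmp C (FM g) (FM f)) \<and>
     (\<forall>X \<in> Ob C. FM (idm C X) = idm C (FO X))"

definition nat_trans_to_id :: "('o, 'm) cat \<Rightarrow> ('o \<Rightarrow> 'o) \<Rightarrow> ('m \<Rightarrow> 'm) \<Rightarrow> ('o \<Rightarrow> 'm) \<Rightarrow> bool" where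
  "nat_trans_to_id C FO FM \<eta> \<longleftrightarrow>
     (\<forall>X \<in> Ob C. \<eta> X \<in> Hom C (FO X) X) \<and>
     (\<forall>X Y f. f \<in> Hom C X Y \<longrightarrow> cmp C (\<eta> Y) (FM f) = cmp C f (\<eta> X))"

definition pre_summability :: "('o, 'm) cat \<Rightarrow> ('o, 'm) presum_data \<Rightarrow> bool" where
  "pre_summability C P \<longleftrightarrow>
     (\<forall>X \<in> Ob C. \<forall>Y \<in> Ob C. zer P X Y \<in> Hom C X Y) \<and>
     endofunctor C (SO P) (SM P) \<and>
     (\<forall>X \<in> Ob C. \<forall>Y \<in> Ob C. SM P (zer P X Y) = zer P (SO P X) (SO P Y)) \<and>
     nat_trans_to_id C (SO P) (SM P) (p0 P) \<and>
     nat_trans_to_id C (SO P) (SM P) (p1 P) \<and>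
     nat_trans_to_id C (SO P) (SM P) (sg P) \<and>
     (\<forall>X Y f g. f \<in> Hom C Y (SO P X) \<longrightarrow> g \<in> Hom C Y (SO P X) \<longrightarrow>
        cmp C (p0 P X) f = cmp C (p0 P X) g \<longrightarrow> cmp C (p1 P X) f = cmp C (p1 P X) g \<longrightarrow> f = g)"

definition summable :: "('o, 'm) cat \<Rightarrow> ('o, 'm) presum_data \<Rightarrow> 'o \<Rightarrow> 'o \<Rightarrow> 'm \<Rightarrow> 'm \<Rightarrow> bool" where
  "summable C P X Y f0 f1 \<longleftrightarrow> f0 \<in> Hom C X Y \<and> f1 \<in> Hom C X Y \<and>
     (\<exists>h \<in> Hom C X (SO P Y). cmp C (p0 P Y) h = f0 \<and> cmp C (p1 P Y) h = f1)"

definition witness :: "('o, 'm) cat \<Rightarrow> ('o, 'm) presum_data \<Rightarrow> 'o \<Rightarrow> 'o \<Rightarrow> 'm \<Rightarrow> 'm \<Rightarrow> 'm" where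
  "witness C P X Y f0 f1 = (THE h. h \<in> Hom C X (SO P Y) \<and>
     cmp C (p0 P Y) h = f0 \<and> cmp C (p1 P Y) h = f1)"

definition psum :: "('o, 'm) cat \<Rightarrow> ('o, 'm) presum_data \<Rightarrow> 'o \<Rightarrow> 'o \<Rightarrow> 'm \<Rightarrow> 'm \<Rightarrow> 'm" where
  "psum C P X Y f0 f1 = cmp C (sg P Y) (witness C P X Y f0 f1)"

end

theory Submission
  imports Defs
begin

lemma witness_unique:
  assumes "pre_summability C P" "h \<in> Hom C X (SO P Y)"
    "cmp C (p0 P Y) h = f0" "cmp C (p1 P Y) h = f1"
  shows "witness C P X Y f0 f1 = h"
  unfolding witness_def
proof (rule the_equality)
  show "h \<in> Hom C X (SO P Y) \<and> cmp C (p0 P Y) h = f0 \<and> cmp C (p1 P Y) h = f1" using assms by blast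
next
  fix k assume "k \<in> Hom C X (SO P Y) \<and> cmp C (p0 P Y) k = f0 \<and> cmp C (p1 P Y) k = f1"
  then show "k = h" using assms unfolding pre_summability_def by metis
qed

theorem mainTheorem1:
  fixes C :: "('o, 'm) cat" and P :: "('o, 'm) presum_data"
    and Z Y :: 'o and f0 f1 g0 g1 :: 'm
  assumes "category C"
    and "pre_summability C P"
    and "Z \<in> Ob C" and "Y \<in> Ob C"
    and "f0 \<in> Hom C Z Y" and "f1 \<in> Hom C Z Y" and "g0 \<in> Hom C Z Y" and "g1 \<in> Hom C Z Y"
    and "summable C P Z Y f0 f1"
    and "summable C P Z Y g0 g1"
    and "summable C P Z (SO P Y) (witness C P Z Y f0 f1) (witness C P Z Y g0 g1)"
  shows "summable C P Z Y f0 g0 \<and> summable C P Z Y f1 g1 \<and>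
         summable C P Z Y (psum C P Z Y f0 g0) (psum C P Z Y f1 g1) \<and>
         psum C P Z (SO P Y) (witness C P Z Y f0 f1) (witness C P Z Y g0 g1)
           = witness C P Z Y (psum C P Z Y f0 g0) (psum C P Z Y f1 g1)"
proof -
  let ?c = "cmp C"
  have cat: "category C" by fact
  have ps: "pre_summability C P" by fact
  have Fu: "endofunctor C (SO P) (SM P)" using ps unfolding pre_summability_def by blast
  have N0: "nat_trans_to_id C (SO P) (SM P) (p0 P)"
   and N1: "nat_trans_to_id C (SO P) (SM P) (p1 P)"
   and NS: "nat_trans_to_id C (SO P) (SM P) (sg P)"
    using ps unfolding pre_summability_def by blast+
  have comp: "\<And>X Y Z f g. f \<in> Hom C X Y \<Longrightarrow> g \<in> Hom C Y Z \<Longrightarrow> ?c g f \<in> Hom C X Z"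
    using cat unfolding category_def by blast
  have assoc: "\<And>W X Y Z f g h. f \<in> Hom C W X \<Longrightarrow> g \<in> Hom C X Y \<Longrightarrow> h \<in> Hom C Y Z \<Longrightarrow>
        ?c h (?c g f) = ?c (?c h g) f"
    using cat unfolding category_def by blast
  have SO: "SO P Y \<in> Ob C" "SO P (SO P Y) \<in> Ob C" using Fu assms(4) unfolding endofunctor_def by auto
  have SMh: "\<And>X Y f. f \<in> Hom C X Y \<Longrightarrow> SM P f \<in> Hom C (SO P X) (SO P Y)"
    using Fu unfolding endofunctor_def by blast
  have p0h: "\<And>X. X \<in> Ob C \<Longrightarrow> p0 P X \<in> Hom C (SO P X) X" using N0 unfolding nat_trans_to_id_def by blast
  have p1h: "\<And>X. X \<in> Ob C \<Longrightarrow> p1 P X \<in> Hom C (SO P X) X" using N1 unfolding nat_trans_to_id_def by blast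
  have sgh: "\<And>X. X \<in> Ob C \<Longrightarrow> sg P X \<in> Hom C (SO P X) X" using NS unfolding nat_trans_to_id_def by blast
  have n0: "\<And>X Y f. f \<in> Hom C X Y \<Longrightarrow> ?c (p0 P Y) (SM P f) = ?c f (p0 P X)" using N0 unfolding nat_trans_to_id_def by blast
  have n1: "\<And>X Y f. f \<in> Hom C X Y \<Longrightarrow> ?c (p1 P Y) (SM P f) = ?c f (p1 P X)" using N1 unfolding nat_trans_to_id_def by blast
  have ns: "\<And>X Y f. f \<in> Hom C X Y \<Longrightarrow> ?c (sg P Y) (SM P f) = ?c f (sg P X)" using NS unfolding nat_trans_to_id_def by blast
  obtain a where a: "a \<in> Hom C Z (SO P Y)" "?c (p0 P Y) a = f0" "?c (p1 P Y) a = f1"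
    using assms(9) unfolding summable_def by blast
  obtain b where b: "b \<in> Hom C Z (SO P Y)" "?c (p0 P Y) b = g0" "?c (p1 P Y) b = g1"
    using assms(10) unfolding summable_def by blast
  have wa: "witness C P Z Y f0 f1 = a" using witness_unique[OF ps a] .
  have wb: "witness C P Z Y g0 g1 = b" using witness_unique[OF ps b] .
  obtain H where H: "H \<in> Hom C Z (SO P (SO P Y))" "?c (p0 P (SO P Y)) H = a" "?c (p1 P (SO P Y)) H = b"
    using assms(11) unfolding summable_def wa wb by blast
  have p0Y: "p0 P Y \<in> Hom C (SO P Y) Y" and p1Y: "p1 P Y \<in> Hom C (SO P Y) Y"
    and sgY: "sg P Y \<in> Hom C (SO P Y) Y" using p0h p1h sgh assms(4) by auto
  have sgSY: "sg P (SO P Y) \<in> Hom C (SO P (SO P Y)) (SO P Y)" using sgh SO by auto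
  have p0SY: "p0 P (SO P Y) \<in> Hom C (SO P (SO P Y)) (SO P Y)" using p0h SO by auto
  have p1SY: "p1 P (SO P Y) \<in> Hom C (SO P (SO P Y)) (SO P Y)" using p1h SO by auto
  have key: "\<And>q. q \<in> Hom C (SO P Y) Y \<Longrightarrow>
      ?c (SM P q) H \<in> Hom C Z (SO P Y) \<and>
      ?c (p0 P Y) (?c (SM P q) H) = ?c q a \<and> ?c (p1 P Y) (?c (SM P q) H) = ?c q b \<and>
      ?c (sg P Y) (?c (SM P q) H) = ?c q (?c (sg P (SO P Y)) H)"
  proof -
    fix q assume q: "q \<in> Hom C (SO P Y) Y"
    have Sq: "SM P q \<in> Hom C (SO P (SO P Y)) (SO P Y)" using SMh[OF q] .
    have 1: "?c (p0 P Y) (?c (SM P q) H) = ?c q a"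
      using assoc[OF H(1) Sq p0Y] n0[OF q] assoc[OF H(1) p0SY q] H(2) by simp
    have 2: "?c (p1 P Y) (?c (SM P q) H) = ?c q b"
      using assoc[OF H(1) Sq p1Y] n1[OF q] assoc[OF H(1) p1SY q] H(3) by simp
    have 3: "?c (sg P Y) (?c (SM P q) H) = ?c q (?c (sg P (SO P Y)) H)"
      using assoc[OF H(1) Sq sgY] ns[OF q] assoc[OF H(1) sgSY q] by simp
    show "?thesis q" using comp[OF H(1) Sq] 1 2 3 by blast
  qed
  note k0 = key[OF p0Y] and k1 = key[OF p1Y]
  have w0: "witness C P Z Y f0 g0 = ?c (SM P (p0 P Y)) H"
    using witness_unique[OF ps] k0 a b by metis
  have w1: "witness C P Z Y f1 g1 = ?c (SM P (p1 P Y)) H"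
    using witness_unique[OF ps] k1 a b by metis
  have s0: "summable C P Z Y f0 g0" unfolding summable_def using k0 a b assms(5,7) by metis
  have s1: "summable C P Z Y f1 g1" unfolding summable_def using k1 a b assms(6,8) by metis
  have e0: "psum C P Z Y f0 g0 = ?c (p0 P Y) (?c (sg P (SO P Y)) H)"
    unfolding psum_def w0 using k0 by blast
  have e1: "psum C P Z Y f1 g1 = ?c (p1 P Y) (?c (sg P (SO P Y)) H)"
    unfolding psum_def w1 using k1 by blast
  have sH: "?c (sg P (SO P Y)) H \<in> Hom C Z (SO P Y)" using comp[OF H(1) sgSY] .
  have W: "witness C P Z Y (psum C P Z Y f0 g0) (psum C P Z Y f1 g1) = ?c (sg P (SO P Y)) H"
    using witness_unique[OF ps sH e0[symmetric] e1[symmetric]] .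
  have s2: "summable C P Z Y (psum C P Z Y f0 g0) (psum C P Z Y f1 g1)"
    unfolding summable_def using sH e0 e1 comp[OF sH p0Y] comp[OF sH p1Y] by metis
  have WH: "witness C P Z (SO P Y) a b = H" using witness_unique[OF ps H] .
  show ?thesis using s0 s1 s2 W unfolding psum_def wa wb WH by simp
qed

end
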